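(* Let $\mathcal{M}=((X,\mathcal{C}),\mathcal{V})$ be a closure model and let $f:X\to X/{\equiv_{IML}}$ map each point to its $\equiv_{IML}$-equivalence class. For all $x_1,x_2\in X$ and $A\subseteq X$: if $x_1\equiv_{IML}x_2$ and $x_1\in\mathcal{C}(A)$, then $x_2\in\mathcal{C}(f^{-1}(f[A]))$.
   Context: Closure space $(X,\mathcal{C})$: $X$ non-empty, $\mathcal{C}(\emptyset)=\emptyset$, $A\subseteq\mathcal{C}(A)$, $\mathcal{C}(A_1\cup A_2)=\mathcal{C}(A_1)\cup\mathcal{C}(A_2)$; closure model adds $\mathcal{V}:AP\to\mathcal{P}(X)$. IML formulas: $\Phi::=p\mid\neg\Phi\mid\bigwedge_{i\in I}\Phi_i\mid\mathcal{N}\Phi$ ($I$ any set); $x\models p$ iff $x\in\mathcal{V}(p)$, negation and conjunction standard, $x\models\mathcal{N}\Phi$ iff $x\in\mathcal{C}(\{y\mid y\models\Phi\})$. $x_1\equiv_{IML}x_2$ iff they satisfy the same IML formulas. $f[A]=\{f(a)\mid a\in A\}$, $f^{-1}(B)=\{x\mid f(x)\in B\}$. *)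

theory Defs
  imports Main
begin

text \<open>Closure space: the carrier X is the (nonempty) type 'x itself.\<close>
definition closure_space :: "('x set \<Rightarrow> 'x set) \<Rightarrow> bool" where
  "closure_space C \<longleftrightarrow> C {} = {} \<and> (\<forall>A. A \<subseteq> C A) \<and>
     (\<forall>A1 A2. C (A1 \<union> A2) = C A1 \<union> C A2)"

datatype ('ap, 'i) iml =
    Atom 'ap
  | Neg "('ap, 'i) iml"
  | Conj "'i set" "'i \<Rightarrow> ('ap, 'i) iml"
  | Nbhd "('ap, 'i) iml"

primrec iml_ext :: "('x set \<Rightarrow> 'x set) \<Rightarrow> ('ap \<Rightarrow> 'x set) \<Rightarrow> ('ap, 'i) iml \<Rightarrow> 'x set" where
  "iml_ext C V (Atom p) = V p"
| "iml_ext C V (Neg \<phi>) = - iml_ext C V \<phi>"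
| "iml_ext C V (Conj I F) = (\<Inter>i\<in>I. iml_ext C V (F i))"
| "iml_ext C V (Nbhd \<phi>) = C (iml_ext C V \<phi>)"

definition iml_sat :: "('x set \<Rightarrow> 'x set) \<Rightarrow> ('ap \<Rightarrow> 'x set) \<Rightarrow> 'x \<Rightarrow> ('ap, 'i) iml \<Rightarrow> bool" where
  "iml_sat C V x \<phi> \<longleftrightarrow> x \<in> iml_ext C V \<phi>"

text \<open>Conjunctions are indexed by subsets of 'x set (the power set of X);
  this loses no generality, since any conjunction over an arbitrary index set has the
  same extension as a conjunction over (a choice of conjuncts for) the set of distinct
  extensions of its conjuncts, which is a set of subsets of X.\<close>
definition iml_equiv :: "('x set \<Rightarrow> 'x set) \<Rightarrow> ('ap \<Rightarrow> 'x set) \<Rightarrow> 'x \<Rightarrow> 'x \<Rightarrow> bool" where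
  "iml_equiv C V x1 x2 \<longleftrightarrow>
     (\<forall>\<phi> :: ('ap, 'x set) iml. iml_sat C V x1 \<phi> \<longleftrightarrow> iml_sat C V x2 \<phi>)"

definition iml_class :: "('x set \<Rightarrow> 'x set) \<Rightarrow> ('ap \<Rightarrow> 'x set) \<Rightarrow> 'x \<Rightarrow> 'x set" where
  "iml_class C V x = {y. iml_equiv C V x y}"

end

theory Submission
  imports Defs
begin

lemma equiv_props:
  "iml_equiv C V x x"
  "iml_equiv C V x y \<Longrightarrow> iml_equiv C V y x"
  "iml_equiv C V x y \<Longrightarrow> iml_equiv C V y z \<Longrightarrow> iml_equiv C V x z"
  unfolding iml_equiv_def by auto

lemma sep:
  fixes C :: "'x set \<Rightarrow> 'x set" and V :: "'ap \<Rightarrow> 'x set"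
  assumes "\<not> iml_equiv C V y z"
  shows "\<exists>\<phi> :: ('ap, 'x set) iml. y \<in> iml_ext C V \<phi> \<and> z \<notin> iml_ext C V \<phi>"
proof -
  obtain \<phi> :: "('ap, 'x set) iml" where "iml_sat C V y \<phi> \<noteq> iml_sat C V z \<phi>"
    using assms unfolding iml_equiv_def by blast
  then show ?thesis unfolding iml_sat_def
    by (metis ComplI iml_ext.simps(2) ComplD)
qed

definition psi :: "('x set \<Rightarrow> 'x set) \<Rightarrow> ('ap \<Rightarrow> 'x set) \<Rightarrow> 'x \<Rightarrow> 'x \<Rightarrow> ('ap, 'x set) iml" where
  "psi C V y z = (SOME \<phi>. y \<in> iml_ext C V \<phi> \<and> z \<notin> iml_ext C V \<phi>)"

lemma psi_prop:
  fixes C :: "'x set \<Rightarrow> 'x set" and V :: "'ap \<Rightarrow> 'x set"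
  assumes "\<not> iml_equiv C V y z"
  shows "y \<in> iml_ext C V (psi C V y z) \<and> z \<notin> iml_ext C V (psi C V y z)"
  unfolding psi_def using someI_ex[OF sep[OF assms]] by blast

definition chi :: "('x set \<Rightarrow> 'x set) \<Rightarrow> ('ap \<Rightarrow> 'x set) \<Rightarrow> 'x \<Rightarrow> ('ap, 'x set) iml" where
  "chi C V y = Conj {{z} | z. \<not> iml_equiv C V y z} (\<lambda>S. psi C V y (the_elem S))"

lemma equiv_ext:
  fixes C :: "'x set \<Rightarrow> 'x set" and V :: "'ap \<Rightarrow> 'x set"
  shows   "iml_equiv C V y w \<Longrightarrow> y \<in> iml_ext C V \<phi> \<Longrightarrow> w \<in> iml_ext C V (\<phi> :: ('ap, 'x set) iml)"
  unfolding iml_equiv_def iml_sat_def by blast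

lemma chi_ext:
  fixes C :: "'x set \<Rightarrow> 'x set" and V :: "'ap \<Rightarrow> 'x set"
  shows "iml_ext C V (chi C V y) = iml_class C V y"
proof
  show "iml_ext C V (chi C V y) \<subseteq> iml_class C V y"
  proof
    fix w assume w: "w \<in> iml_ext C V (chi C V y)"
    show "w \<in> iml_class C V y"
    proof (rule ccontr)
      assume "w \<notin> iml_class C V y"
      hence n: "\<not> iml_equiv C V y w" unfolding iml_class_def by simp
      hence "{w} \<in> {{z} | z. \<not> iml_equiv C V y z}" by blast
      with w have "w \<in> iml_ext C V (psi C V y w)" unfolding chi_def by force
      with psi_prop[OF n] show False by blast
    qed
  qed
next
  show "iml_class C V y \<subseteq> iml_ext C V (chi C V y)"
  proof
    fix w assume "w \<in> iml_class C V y"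
    hence e: "iml_equiv C V y w" unfolding iml_class_def by simp
    show "w \<in> iml_ext C V (chi C V y)"
    proof -
      have "w \<in> iml_ext C V (psi C V y z)" if "\<not> iml_equiv C V y z" for z
      proof -
        from psi_prop[OF that] have "y \<in> iml_ext C V (psi C V y z)" by blast
        thus ?thesis by (rule equiv_ext[OF e])
      qed
      thus ?thesis unfolding chi_def by auto
    qed
  qed
qed

theorem lemma10:
  fixes C :: "'x set \<Rightarrow> 'x set" and V :: "'ap \<Rightarrow> 'x set"
    and x1 x2 :: 'x and A :: "'x set"
  assumes "closure_space C"
    and "iml_equiv C V x1 x2"
    and "x1 \<in> C A"
  shows "x2 \<in> C (iml_class C V -` (iml_class C V ` A))"
proof -
  let ?B = "iml_class C V -` (iml_class C V ` A)"
  define \<Phi> :: "('ap, 'x set) iml" where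
    "\<Phi> = Neg (Conj {{a} | a. a \<in> A} (\<lambda>S. Neg (chi C V (the_elem S))))"
  have cls: "iml_class C V w = iml_class C V a \<longleftrightarrow> iml_equiv C V a w" for a w
    unfolding iml_class_def iml_equiv_def by auto
  have "iml_ext C V \<Phi> = (\<Union>a\<in>A. iml_class C V a)"
  proof
    show "iml_ext C V \<Phi> \<subseteq> (\<Union>a\<in>A. iml_class C V a)"
      unfolding \<Phi>_def by (auto simp: chi_ext)
    show "(\<Union>a\<in>A. iml_class C V a) \<subseteq> iml_ext C V \<Phi>"
    proof
      fix w assume "w \<in> (\<Union>a\<in>A. iml_class C V a)"
      then obtain a where a: "a \<in> A" "w \<in> iml_class C V a" by blast
      have "{a} \<in> {{a} | a. a \<in> A}" using a by blast
      then show "w \<in> iml_ext C V \<Phi>" unfolding \<Phi>_def using a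
        by (simp add: chi_ext) (metis the_elem_eq)
    qed
  qed
  also have "\<dots> = ?B"
  proof
    show "(\<Union>a\<in>A. iml_class C V a) \<subseteq> ?B"
    proof
      fix w assume "w \<in> (\<Union>a\<in>A. iml_class C V a)"
      then obtain a where "a \<in> A" "iml_equiv C V a w" unfolding iml_class_def by blast
      then show "w \<in> ?B" using cls[of w a] by (simp add: image_eqI)
    qed
    show "?B \<subseteq> (\<Union>a\<in>A. iml_class C V a)"
    proof
      fix w assume "w \<in> ?B"
      then obtain a where "a \<in> A" "iml_class C V w = iml_class C V a" by auto
      then show "w \<in> (\<Union>a\<in>A. iml_class C V a)" using cls[of w a] unfolding iml_class_def by blast
    qed
  qed
  finally have ext: "iml_ext C V \<Phi> = ?B" .
  have "A \<subseteq> ?B" by auto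
  hence "C A \<subseteq> C ?B" using assms(1) unfolding closure_space_def
    by (metis Un_absorb1 Un_upper1)
  hence "iml_sat C V x1 (Nbhd \<Phi>)" using assms(3) ext unfolding iml_sat_def by auto
  hence "iml_sat C V x2 (Nbhd \<Phi>)" using assms(2) unfolding iml_equiv_def by blast
  thus ?thesis using ext unfolding iml_sat_def by simp
qed

end
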